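(* Let $s>0$ and $\epsilon\in(0,1)$. Given a polynomial decay stream of $n$ points (decay function $w(t)=t^{-s}$) as input to the block-merging algorithm described in the context, the number of blocks it maintains is $O(\epsilon^{-1}s\log n)$.
   Context: Polynomial decay stream: points arrive sequentially and the $t$-th most recent point has weight $t^{-s}$. Markers: for each $i\in\mathbb N$, $x_i$ is the minimum integer $\ge 2^i$ such that $\frac{1-\epsilon}{(x_i-2^i+1)^s}\le\frac{1+\epsilon}{x_i^s}$, i.e. $\left(\frac{x_i}{x_i-2^i+1}\right)^s\le\frac{1+\epsilon}{1-\epsilon}$. The algorithm partitions the stream into blocks of consecutive points; a block is written $[a,b]$ where $a$ and $b$ are the positions (relative to the start of the stream) of its first and last points, and for each block a coreset (computed by an offline coreset construction algorithm) is stored. When the $n$-th point $p_n$ arrives, the algorithm inserts $[n,n]$ as a new block; then for each block $[a,b]$, if $a+x_i<n$ for some $i$, it merges all blocks in the range $[a,a+2^i-1]$ into a single block (and reduces the union of their coresets to a single coreset). At the end each block $[a,b]$ receives weight $\frac12\left(\frac{1-\epsilon}{a^s}+\frac{1+\epsilon}{b^s}\right)$.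
   Formalization: The number of blocks is at most C (1 + s/epsilon) ln n for all n >= 2, with one constant C > 0 independent of s, epsilon and n, in place of $O(\epsilon^{-1}s\log n)$. Apart from conventions, each condition added here is assumed in the paper as well or is needed for the statement above to hold. *)

theory Defs
  imports "HOL-Analysis.Analysis"
begin

definition marker :: "real \<Rightarrow> real \<Rightarrow> nat \<Rightarrow> nat" where
  "marker s eps i =
     (LEAST x::nat. 2 ^ i \<le> x \<and>
        (real x / real (x - 2 ^ i + 1)) powr s \<le> (1 + eps) / (1 - eps))"

text \<open>Blocks are pairs (a,b)
  (first and last position), kept in increasing order of positions. Each block
  (a,b) is visited from oldest to newest; if a + x_i < n for some i, all blocks
  contained in the range [a, a+2^i-1] are merged into one block (taking the
  largest such i subsumes all smaller ones, since the ranges are nested).\<close>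
function merge_pass :: "real \<Rightarrow> real \<Rightarrow> nat \<Rightarrow> (nat \<times> nat) list \<Rightarrow> (nat \<times> nat) list" where
  "merge_pass s eps n [] = []"
| "merge_pass s eps n ((a, b) # bs) =
     (let I = {i. a + marker s eps i < n} in
      if I = {} then (a, b) # merge_pass s eps n bs
      else
        let e = a + 2 ^ (Max I) - 1;
            inside = filter (\<lambda>(c, d). d \<le> e) bs;
            rest = filter (\<lambda>(c, d). \<not> d \<le> e) bs
        in (a, Max (insert b (snd ` set inside))) # merge_pass s eps n rest)"
  by pat_completeness auto
termination
  by (relation "Wellfounded.measure (\<lambda>(_, _, _, l). length l)") (auto simp: Let_def le_imp_less_Suc)

fun blocks :: "real \<Rightarrow> real \<Rightarrow> nat \<Rightarrow> (nat \<times> nat) list" where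
  "blocks s eps 0 = []"
| "blocks s eps (Suc n) = merge_pass s eps (Suc n) (blocks s eps n @ [(Suc n, Suc n)])"

end

theory Submission
  imports Defs
begin

lemma marker_exists:
  fixes s e :: real and i :: nat
  assumes s: "0 < s" and e: "0 < e" "e < 1"
  defines "K \<equiv> nat \<lceil>s / e\<rceil> + 2"
  shows "2 ^ i \<le> 2 ^ i * K \<and>
        (real (2 ^ i * K) / real (2 ^ i * K - 2 ^ i + 1)) powr s \<le> (1 + e) / (1 - e)"
proof
  show "2 ^ i \<le> 2 ^ i * K" unfolding K_def by simp
  define m :: real where "m = 2 ^ i"
  have m: "m \<ge> 1" unfolding m_def by simp
  have K2: "real K \<ge> 2" unfolding K_def by simp
  have Kse: "real K - 1 \<ge> s / e + 1"
  proof -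
    have "real (nat \<lceil>s / e\<rceil>) \<ge> s / e" by linarith
    thus ?thesis unfolding K_def by simp
  qed
  have eq: "real (2 ^ i * K - 2 ^ i + 1) = m * (real K - 1) + 1"
  proof -
    have "2 ^ i \<le> (2::nat) ^ i * K" unfolding K_def by simp
    hence "real (2 ^ i * K - 2 ^ i + 1) = real (2 ^ i * K) - real (2^i) + 1" by (simp add: of_nat_diff)
    thus ?thesis unfolding m_def by (simp add: algebra_simps)
  qed
  have r1: "real (2 ^ i * K) / real (2 ^ i * K - 2 ^ i + 1) \<le> real K / (real K - 1)"
  proof -
    have X: "real (2 ^ i * K) = m * real K" unfolding m_def by simp
    have "m * real K / (m * (real K - 1) + 1) \<le> m * real K / (m * (real K - 1))"
    proof (rule divide_left_mono)
      have "m * (real K - 1) > 0" using m K2 by simp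
      thus "0 < (m * (real K - 1) + 1) * (m * (real K - 1))" by (simp add: add_pos_pos)
    qed (use m K2 in auto)
    also have "\<dots> = real K / (real K - 1)" using m by simp
    finally show ?thesis unfolding eq X .
  qed
  have pos: "0 < real (2 ^ i * K) / real (2 ^ i * K - 2 ^ i + 1)"
  proof -
    have "m * (real K - 1) + 1 > 0" using m K2 by (simp add: add_pos_pos)
    moreover have "real (2 ^ i * K) > 0" using K2 by simp
    ultimately show ?thesis unfolding eq by simp
  qed
  have "(real (2 ^ i * K) / real (2 ^ i * K - 2 ^ i + 1)) powr s \<le> (real K / (real K - 1)) powr s"
    using r1 pos s by (intro powr_mono2) auto
  also have "\<dots> = exp (s * ln (real K / (real K - 1)))"
    using K2 by (simp add: powr_def)
  also have "\<dots> \<le> exp (ln ((1 + e) / (1 - e)))"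
  proof -
    have a: "ln (real K / (real K - 1)) \<le> 1 / (real K - 1)"
    proof -
      have "ln (real K / (real K - 1)) \<le> real K / (real K - 1) - 1"
        using K2 by (intro ln_le_minus_one) simp
      moreover have "real K / (real K - 1) - 1 = 1 / (real K - 1)"
        using K2 by (simp add: diff_divide_distrib divide_simps)
      ultimately show ?thesis by simp
    qed
    have "s * (1 / (real K - 1)) \<le> e"
    proof -
      have "s / e \<le> real K - 1" using Kse by simp
      hence "s \<le> e * (real K - 1)" using e by (simp add: divide_le_eq mult.commute)
      thus ?thesis using K2 by (simp add: divide_le_eq)
    qed
    moreover have "e \<le> ln ((1 + e) / (1 - e))"
    proof -
      have "ln ((1 - e) / (1 + e)) \<le> (1 - e) / (1 + e) - 1"
        using e by (intro ln_le_minus_one) auto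
      moreover have "ln ((1 - e) / (1 + e)) = - ln ((1 + e) / (1 - e))"
        using e by (simp add: ln_div)
      moreover have "(1 - e) / (1 + e) - 1 = - 2 * e / (1 + e)" using e by (simp add: field_simps)
      moreover have "2 * e / (1 + e) \<ge> e" using e by (simp add: field_simps)
      ultimately show ?thesis by linarith
    qed
    ultimately have "s * ln (real K / (real K - 1)) \<le> ln ((1 + e) / (1 - e))"
      using a s by (smt (verit) mult_left_mono)
    thus ?thesis by simp
  qed
  also have "\<dots> = (1 + e) / (1 - e)" using e by simp
  finally show "(real (2 ^ i * K) / real (2 ^ i * K - 2 ^ i + 1)) powr s \<le> (1 + e) / (1 - e)" .
qed

lemma marker_bounds:
  fixes s e :: real
  assumes s: "0 < s" and e: "0 < e" "e < 1"
  shows "2 ^ i \<le> marker s e i \<and> marker s e i \<le> 2 ^ i * (nat \<lceil>s / e\<rceil> + 2)"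
proof -
  let ?P = "\<lambda>x::nat. 2 ^ i \<le> x \<and> (real x / real (x - 2 ^ i + 1)) powr s \<le> (1 + e) / (1 - e)"
  have ex: "?P (2 ^ i * (nat \<lceil>s / e\<rceil> + 2))" using marker_exists[OF assms] by blast
  have "?P (marker s e i)" unfolding marker_def by (rule LeastI[where P="?P", OF ex])
  moreover have "marker s e i \<le> 2 ^ i * (nat \<lceil>s / e\<rceil> + 2)" unfolding marker_def by (rule Least_le[where P="?P", OF ex])
  ultimately show ?thesis by blast
qed

lemma marker0:
  fixes s e :: real
  assumes s: "0 < s" and e: "0 < e" "e < 1"
  shows "marker s e 0 \<le> 1"
  unfolding marker_def
  by (rule Least_le) (use e in \<open>simp add: field_simps\<close>)

definition RR :: "nat \<times> nat \<Rightarrow> nat \<times> nat \<Rightarrow> bool" where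
  "RR p q \<longleftrightarrow> snd p < fst q"

lemma sw_cases: "sorted_wrt f xs \<Longrightarrow> p \<in> set xs \<Longrightarrow> q \<in> set xs \<Longrightarrow> p = q \<or> f p q \<or> f q p"
  by (induction xs) auto

lemma mp_len: "length (merge_pass s e n bs) \<le> length bs"
proof (induction s e n bs rule: merge_pass.induct)
  case (1 s eps n)
  then show ?case by simp
next
  case (2 s eps n a b bs)
  show ?case
  proof (cases "{i. a + marker s eps i < n} = {}")
    case True
    then show ?thesis using 2(1) by simp
  next
    case False
    let ?e = "a + 2 ^ Max {i. a + marker s eps i < n} - 1"
    have h1: "length (merge_pass s eps n (filter (\<lambda>(c, d). \<not> d \<le> ?e) bs)) \<le> length (filter (\<lambda>(c, d). \<not> d \<le> ?e) bs)"
      using 2(2)[OF refl False refl refl refl] .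
    have h2: "length (filter (\<lambda>(c, d). \<not> d \<le> ?e) bs) \<le> length bs" by (rule length_filter_le)
    have eqm: "merge_pass s eps n ((a, b) # bs) = (a, Max (insert b (snd ` set (filter (\<lambda>(c, d). d \<le> ?e) bs)))) # merge_pass s eps n (filter (\<lambda>(c, d). \<not> d \<le> ?e) bs)"
      using False by (simp only: merge_pass.simps Let_def if_False)
    show ?thesis unfolding eqm using le_trans[OF h1 h2] by simp
  qed
qed

lemma mp_struct: "\<exists>B R3. merge_pass s e n ((c, d) # R2) = (c, B) # merge_pass s e n R3 \<and> (\<exists>P. R3 = filter P R2)"
proof (cases "{i. c + marker s e i < n} = {}")
  case True
  then show ?thesis by (intro exI[of _ d] exI[of _ R2]) (auto intro: exI[of _ "\<lambda>_. True"])
next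
  case False
  then show ?thesis by (auto simp: Let_def)
qed

lemma mp_elems: "(\<forall>p\<in>set bs. fst p \<le> snd p) \<Longrightarrow>
  \<forall>p\<in>set (merge_pass s e n bs). fst p \<le> snd p \<and> fst p \<in> fst ` set bs \<and> snd p \<in> snd ` set bs"
proof (induction s e n bs rule: merge_pass.induct)
  case (1 s eps n)
  then show ?case by simp
next
  case (2 s eps n a b bs)
  show ?case
  proof (cases "{i. a + marker s eps i < n} = {}")
    case True
    have eq: "merge_pass s eps n ((a, b) # bs) = (a, b) # merge_pass s eps n bs"
      using True by (simp only: merge_pass.simps Let_def if_True simp_thms)
    have IH: "\<forall>p\<in>set (merge_pass s eps n bs). fst p \<le> snd p \<and> fst p \<in> fst ` set bs \<and> snd p \<in> snd ` set bs"
      using 2(1)[OF refl True] 2(3) by simp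
    show ?thesis unfolding eq using IH 2(3) by auto
  next
    case False
    define e where "e = a + 2 ^ Max {i. a + marker s eps i < n} - 1"
    define ins where "ins = filter (\<lambda>(c, d). d \<le> e) bs"
    define rest where "rest = filter (\<lambda>(c, d). \<not> d \<le> e) bs"
    have IH: "\<forall>p\<in>set (merge_pass s eps n rest). fst p \<le> snd p \<and> fst p \<in> fst ` set rest \<and> snd p \<in> snd ` set rest"
      using 2(2)[OF refl False e_def ins_def rest_def] 2(3) unfolding rest_def by auto
    have eq: "merge_pass s eps n ((a, b) # bs) = (a, Max (insert b (snd ` set ins))) # merge_pass s eps n rest"
      using False by (simp only: merge_pass.simps Let_def if_False e_def ins_def rest_def)
    have m1: "Max (insert b (snd ` set ins)) \<in> insert b (snd ` set ins)" by (rule Max_in) auto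
    have m2: "b \<le> Max (insert b (snd ` set ins))" by (rule Max_ge) auto
    have "set ins \<subseteq> set bs" "set rest \<subseteq> set bs" unfolding ins_def rest_def by auto
    show ?thesis unfolding eq
    proof
      fix p assume "p \<in> set ((a, Max (insert b (snd ` set ins))) # merge_pass s eps n rest)"
      then consider "p = (a, Max (insert b (snd ` set ins)))" | "p \<in> set (merge_pass s eps n rest)" by auto
      then show "fst p \<le> snd p \<and> fst p \<in> fst ` set ((a, b) # bs) \<and> snd p \<in> snd ` set ((a, b) # bs)"
      proof cases
        case 1
        have "a \<le> b" using 2(3) by simp
        hence "a \<le> Max (insert b (snd ` set ins))" using m2 by linarith
        moreover have "Max (insert b (snd ` set ins)) \<in> snd ` set ((a, b) # bs)"
          using m1 \<open>set ins \<subseteq> set bs\<close> by auto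
        ultimately show ?thesis using 1 by simp
      next
        case 2
        then show ?thesis using IH \<open>set rest \<subseteq> set bs\<close> by auto
      qed
    qed
  qed
qed

lemma mp_sorted: "sorted_wrt RR bs \<Longrightarrow> (\<forall>p\<in>set bs. fst p \<le> snd p) \<Longrightarrow> sorted_wrt RR (merge_pass s e n bs)"
proof (induction s e n bs rule: merge_pass.induct)
  case (1 s eps n)
  then show ?case by simp
next
  case (2 s eps n a b bs)
  show ?case
  proof (cases "{i. a + marker s eps i < n} = {}")
    case True
    have eq: "merge_pass s eps n ((a, b) # bs) = (a, b) # merge_pass s eps n bs"
      using True by (simp only: merge_pass.simps Let_def if_True simp_thms)
    have "sorted_wrt RR (merge_pass s eps n bs)" using 2(1)[OF refl True] 2(3,4) by simp
    moreover have "\<forall>q\<in>set (merge_pass s eps n bs). RR (a, b) q"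
      using mp_elems[of bs s eps n] 2(3,4) by (force simp: RR_def)
    ultimately show ?thesis unfolding eq by simp
  next
    case False
    define e where "e = a + 2 ^ Max {i. a + marker s eps i < n} - 1"
    define ins where "ins = filter (\<lambda>(c, d). d \<le> e) bs"
    define rest where "rest = filter (\<lambda>(c, d). \<not> d \<le> e) bs"
    have sbs: "sorted_wrt RR bs" using 2(3) by simp
    have IH: "sorted_wrt RR (merge_pass s eps n rest)"
      using 2(2)[OF refl False e_def ins_def rest_def] sorted_wrt_filter[OF sbs] 2(4) unfolding rest_def by auto
    have eq: "merge_pass s eps n ((a, b) # bs) = (a, Max (insert b (snd ` set ins))) # merge_pass s eps n rest"
      using False by (simp only: merge_pass.simps Let_def if_False e_def ins_def rest_def)
    have m1: "Max (insert b (snd ` set ins)) \<in> insert b (snd ` set ins)" by (rule Max_in) auto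
    have key: "Max (insert b (snd ` set ins)) < fst q" if q: "q \<in> set rest" for q
    proof -
      have qb: "q \<in> set bs" "snd q > e" using q unfolding rest_def by auto
      have "b < fst q" using 2(3) qb(1) by (auto simp: RR_def)
      moreover have "snd p < fst q" if p: "p \<in> set ins" for p
      proof -
        have pb: "p \<in> set bs" "snd p \<le> e" using p unfolding ins_def by auto
        have "p = q \<or> RR p q \<or> RR q p" by (rule sw_cases[OF sbs pb(1) qb(1)])
        moreover have "fst p \<le> snd p" using 2(4) pb(1) by auto
        ultimately show ?thesis using pb qb by (auto simp: RR_def)
      qed
      ultimately show ?thesis using m1 by auto
    qed
    have "\<forall>q\<in>set (merge_pass s eps n rest). RR (a, Max (insert b (snd ` set ins))) q"
    proof
      fix q assume "q \<in> set (merge_pass s eps n rest)"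
      then obtain q' where "q' \<in> set rest" "fst q = fst q'"
        using mp_elems[of rest s eps n] 2(4) unfolding rest_def by force
      then show "RR (a, Max (insert b (snd ` set ins))) q" using key by (simp add: RR_def)
    qed
    then show ?thesis unfolding eq using IH by simp
  qed
qed


lemma ln2_ge: "ln (2::real) \<ge> 1/2"
proof -
  have "ln (1/2::real) \<le> 1/2 - 1" by (rule ln_le_minus_one) simp
  moreover have "ln (1/2::real) = - ln 2" by (simp add: ln_div)
  ultimately show ?thesis by simp
qed

lemma arith_step:
  fixes u t t' P K :: real
  assumes "2 \<le> u" "u \<le> t" "u \<le> 2 * K * P" "t' \<le> u - P" "0 \<le> t'" "K \<ge> 2"
  shows "2 + 4 * K * ln (max 1 t') \<le> 4 * K * ln (max 1 t)"
proof -
  have t2: "t \<ge> 2" using assms by simp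
  hence mt: "max 1 t = t" by simp
  have lnt: "ln t \<ge> 1/2" using ln2_ge ln_le_cancel_iff[of 2 t] t2 by linarith
  show ?thesis
  proof (cases "t' \<le> 1")
    case True
    hence "max 1 t' = 1" by simp
    moreover have "4 * K * ln t \<ge> 4 * 2 * (1/2)"
      using lnt assms(6) by (intro mult_mono) auto
    ultimately show ?thesis unfolding mt by simp
  next
    case False
    hence mt': "max 1 t' = t'" by simp
    define d where "d = 1 / (2 * K)"
    have d: "0 < d" "d \<le> 1/4" using assms(6) unfolding d_def by (auto simp: field_simps)
    have "P \<ge> u * d" using assms(3,6) unfolding d_def by (simp add: field_simps)
    hence "t' \<le> u * (1 - d)" using assms(4) by (simp add: algebra_simps)
    hence "ln t' \<le> ln (u * (1 - d))" using False d by (subst ln_le_cancel_iff) auto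
    also have "\<dots> = ln u + ln (1 - d)" using d assms(1) by (simp add: ln_mult)
    also have "ln (1 - d) \<le> (1 - d) - 1" using d by (intro ln_le_minus_one) auto
    also have "ln u \<le> ln t" using assms(1,2) by simp
    finally have "ln t' \<le> ln t - d" by simp
    hence "4 * K * ln t' \<le> 4 * K * (ln t - d)" using assms(6) by simp
    also have "\<dots> = 4 * K * ln t - 2" unfolding d_def using assms(6) by (simp add: field_simps)
    finally show ?thesis unfolding mt mt' by simp
  qed
qed


lemma len_le2:
  assumes "sorted_wrt RR bs" "\<forall>p\<in>set bs. fst p \<le> snd p \<and> n - 1 \<le> fst p \<and> fst p \<le> n"
  shows "length bs \<le> 2"
proof -
  have "sorted_wrt (<) (map fst bs)"
    unfolding sorted_wrt_map
    by (rule sorted_wrt_mono_rel[OF _ assms(1)]) (use assms(2) in \<open>fastforce simp: RR_def\<close>)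
  hence d: "distinct (map fst bs)" by (simp add: strict_sorted_iff)
  have "length bs = card (set (map fst bs))" using distinct_card[OF d] by simp
  also have "\<dots> \<le> card {n - 1..n}" by (rule card_mono) (use assms(2) in auto)
  also have "\<dots> \<le> 2" by simp
  finally show ?thesis .
qed

lemma main_bound:
  fixes s e :: real
  assumes s: "0 < s" and e: "0 < e" "e < 1"
  defines "K \<equiv> nat \<lceil>s / e\<rceil> + 2"
  shows "\<forall>bs. sorted_wrt RR bs \<longrightarrow> (\<forall>p\<in>set bs. fst p \<le> snd p \<and> fst p \<le> n \<and> n \<le> fst p + t) \<longrightarrow>
      real (length (merge_pass s e n bs)) \<le> 2 + 4 * real K * ln (max 1 (real t))"
proof (induction t rule: less_induct)
  case (less t)
  have K2: "real K \<ge> 2" unfolding K_def by simp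
  have lnpos: "ln (max 1 (real x)) \<ge> 0" for x by simp
  show ?case
  proof (intro allI impI)
    fix bs assume srt: "sorted_wrt RR bs"
      and inv: "\<forall>p\<in>set bs. fst p \<le> snd p \<and> fst p \<le> n \<and> n \<le> fst p + t"
    show "real (length (merge_pass s e n bs)) \<le> 2 + 4 * real K * ln (max 1 (real t))"
    proof (cases bs)
      case Nil
      then show ?thesis using lnpos[of t] K2 by simp
    next
      case (Cons h bs')
      obtain a b where h: "h = (a, b)" by force
      have bsc: "bs = (a, b) # bs'" using Cons h by simp
      show ?thesis
      proof (cases "n \<le> a + 1")
        case True
        have "\<forall>p\<in>set bs. fst p \<le> snd p \<and> n - 1 \<le> fst p \<and> fst p \<le> n"
        proof
          fix p assume p: "p \<in> set bs"
          have "a \<le> fst p"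
          proof (cases "p = (a, b)")
            case False
            hence "p \<in> set bs'" using p bsc by simp
            hence "b < fst p" using srt bsc by (auto simp: RR_def)
            moreover have "a \<le> b" using inv bsc by simp
            ultimately show ?thesis by simp
          qed simp
          then show "fst p \<le> snd p \<and> n - 1 \<le> fst p \<and> fst p \<le> n" using inv p True by auto
        qed
        hence "length bs \<le> 2" using len_le2 srt by blast
        hence "length (merge_pass s e n bs) \<le> 2" using mp_len[of s e n bs] by simp
        hence "real (length (merge_pass s e n bs)) \<le> 2" by simp
        moreover have "0 \<le> 4 * real K * ln (max 1 (real t))" using lnpos[of t] K2 by simp
        ultimately show ?thesis by linarith
      next
        case False
        define I where "I = {i. a + marker s e i < n}"
        have m0: "marker s e 0 \<le> 1" by (rule marker0[OF s e])
        have I0: "0 \<in> I" using m0 False unfolding I_def by simp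
        have finI: "finite I"
        proof (rule finite_subset[of _ "{..<n}"])
          show "I \<subseteq> {..<n}"
          proof
            fix i assume "i \<in> I"
            hence "a + marker s e i < n" unfolding I_def by simp
            moreover have "i < 2 ^ i" by (rule less_exp)
            moreover have "2 ^ i \<le> marker s e i" using marker_bounds[OF s e] by blast
            ultimately have "i < n" by linarith
            thus "i \<in> {..<n}" by simp
          qed
        qed simp
        define M where "M = Max I"
        have MI: "M \<in> I" unfolding M_def using finI I0 by (intro Max_in) auto
        have M1: "M + 1 \<notin> I"
        proof
          assume "M + 1 \<in> I"
          hence "M + 1 \<le> M" unfolding M_def using finI by (intro Max_ge) auto
          thus False by simp
        qed
        have nM1: "n \<le> a + marker s e (M + 1)" using M1 unfolding I_def by simp
        have mM1: "marker s e (M + 1) \<le> 2 ^ (M + 1) * K" using marker_bounds[OF s e] unfolding K_def by blast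
        define ee where "ee = a + 2 ^ M - 1"
        define ins where "ins = filter (\<lambda>(c, d). d \<le> ee) bs'"
        define R1 where "R1 = filter (\<lambda>(c, d). \<not> d \<le> ee) bs'"
        have Ine: "I \<noteq> {}" using I0 by auto
        have eq: "merge_pass s e n ((a, b) # bs') = (a, Max (insert b (snd ` set ins))) # merge_pass s e n R1"
          using Ine unfolding I_def ee_def ins_def R1_def M_def by (simp only: merge_pass.simps Let_def if_False)
        have srt': "sorted_wrt RR bs'" using srt bsc by simp
        have sR1: "sorted_wrt RR R1" unfolding R1_def by (rule sorted_wrt_filter[OF srt'])
        have setR1: "set R1 \<subseteq> set bs'" unfolding R1_def by auto
        have tge: "n - a \<le> t" using inv bsc by auto
        show ?thesis
        proof (cases R1)
          case Nil
          then show ?thesis unfolding bsc eq using lnpos[of t] K2 by simp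
        next
          case (Cons h2 R2)
          obtain c d where h2: "h2 = (c, d)" by force
          have R1c: "R1 = (c, d) # R2" using Cons h2 by simp
          obtain B R3 P where st: "merge_pass s e n ((c, d) # R2) = (c, B) # merge_pass s e n R3"
            and R3: "R3 = filter P R2"
            using mp_struct by blast
          have "(c, d) \<in> set R1" using R1c by simp
          hence dee: "ee < d" unfolding R1_def by auto
          have sR2: "sorted_wrt RR R2" using sR1 R1c by simp
          have R2d: "\<forall>q\<in>set R2. d < fst q" using sR1 R1c by (auto simp: RR_def)
          define t' where "t' = n - (a + 2 ^ M)"
          have "(0::nat) < 2 ^ M" by simp
          hence tlt: "t' < t" unfolding t'_def using False tge by linarith
          have IH: "real (length (merge_pass s e n R3)) \<le> 2 + 4 * real K * ln (max 1 (real t'))"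
          proof -
            have "sorted_wrt RR R3" unfolding R3 by (rule sorted_wrt_filter[OF sR2])
            moreover have "\<forall>p\<in>set R3. fst p \<le> snd p \<and> fst p \<le> n \<and> n \<le> fst p + t'"
            proof
              fix p assume p: "p \<in> set R3"
              hence pR2: "p \<in> set R2" unfolding R3 by simp
              hence "p \<in> set bs" using setR1 R1c bsc by auto
              hence i1: "fst p \<le> snd p \<and> fst p \<le> n" using inv by simp
              have "d < fst p" using R2d pR2 by simp
              hence "a + 2 ^ M \<le> fst p" using dee unfolding ee_def by simp
              thus "fst p \<le> snd p \<and> fst p \<le> n \<and> n \<le> fst p + t'" using i1 unfolding t'_def by simp
            qed
            ultimately show ?thesis using less.IH[OF tlt] by blast
          qed
          have len: "length (merge_pass s e n bs) = 2 + length (merge_pass s e n R3)"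
            unfolding bsc eq R1c st by simp
          have ar: "2 + 4 * real K * ln (max 1 (real t')) \<le> 4 * real K * ln (max 1 (real t))"
          proof (rule arith_step[where u = "real (n - a)" and P = "2 ^ M"])
            show "2 \<le> real (n - a)" using False by simp
            show "real (n - a) \<le> real t" using tge by simp
            have "n - a \<le> 2 ^ (M + 1) * K" using nM1 mM1 by simp
            hence "real (n - a) \<le> real (2 ^ (M + 1) * K)" by (simp only: of_nat_le_iff)
            thus "real (n - a) \<le> 2 * real K * 2 ^ M" by (simp add: mult_ac)
            have "a + marker s e M < n" using MI unfolding I_def by simp
            moreover have "2 ^ M \<le> marker s e M" using marker_bounds[OF s e] by blast
            ultimately have "a + 2 ^ M \<le> n" by linarith
            thus "real t' \<le> real (n - a) - 2 ^ M" unfolding t'_def by (simp add: of_nat_diff)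
          qed (use K2 in auto)
          show ?thesis using len IH ar by simp
        qed
      qed
    qed
  qed
qed


lemma blocks_inv:
  "sorted_wrt RR (blocks s e n) \<and> (\<forall>p\<in>set (blocks s e n). 1 \<le> fst p \<and> fst p \<le> snd p \<and> snd p \<le> n)"
proof (induction n)
  case 0
  then show ?case by simp
next
  case (Suc n)
  define L where "L = blocks s e n @ [(Suc n, Suc n)]"
  have sL: "sorted_wrt RR L" unfolding L_def using Suc by (auto simp: sorted_wrt_append RR_def[abs_def])
  have iL: "\<forall>p\<in>set L. 1 \<le> fst p \<and> fst p \<le> snd p \<and> snd p \<le> Suc n"
    unfolding L_def using Suc by auto
  have "blocks s e (Suc n) = merge_pass s e (Suc n) L" unfolding L_def by simp
  moreover have "sorted_wrt RR (merge_pass s e (Suc n) L)" using mp_sorted sL iL by blast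
  moreover have "\<forall>p\<in>set (merge_pass s e (Suc n) L). 1 \<le> fst p \<and> fst p \<le> snd p \<and> snd p \<le> Suc n"
  proof
    fix p assume "p \<in> set (merge_pass s e (Suc n) L)"
    hence "fst p \<le> snd p \<and> fst p \<in> fst ` set L \<and> snd p \<in> snd ` set L"
      using mp_elems[of L s e "Suc n"] iL by blast
    thus "1 \<le> fst p \<and> fst p \<le> snd p \<and> snd p \<le> Suc n" using iL by force
  qed
  ultimately show ?case by simp
qed

theorem lemma2:
  shows "\<exists>C>0. \<forall>s eps n. 0 < s \<longrightarrow> 0 < eps \<longrightarrow> eps < 1 \<longrightarrow> 2 \<le> n \<longrightarrow>
           real (length (blocks s eps n)) \<le> C * (1 + s / eps) * ln (real n)"
proof (intro exI[of _ 16] conjI allI impI)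
  fix s eps :: real and n :: nat
  assume s: "0 < s" and e: "0 < eps" "eps < 1" and n: "2 \<le> n"
  define K where "K = nat \<lceil>s / eps\<rceil> + 2"
  obtain m where m: "n = Suc m" using n by (cases n) auto
  have m1: "1 \<le> m" using n m by simp
  define L where "L = blocks s eps m @ [(Suc m, Suc m)]"
  have sL: "sorted_wrt RR L" unfolding L_def using blocks_inv[of s eps m] by (auto simp: sorted_wrt_append RR_def[abs_def])
  have iL: "\<forall>p\<in>set L. fst p \<le> snd p \<and> fst p \<le> Suc m \<and> Suc m \<le> fst p + m"
    unfolding L_def using blocks_inv[of s eps m] by force
  have bl: "blocks s eps n = merge_pass s eps (Suc m) L" unfolding L_def m by simp
  have b1: "real (length (blocks s eps n)) \<le> 2 + 4 * real K * ln (max 1 (real m))"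
    unfolding bl K_def using main_bound[OF s e, of "Suc m" m] sL iL by blast
  have "ln (max 1 (real m)) \<le> ln (real n)" using m1 m by simp
  moreover have lnn: "ln (real n) \<ge> 1/2"
  proof -
    have "ln 2 \<le> ln (real n)" using n by simp
    thus ?thesis using ln2_ge by linarith
  qed
  moreover have "real K \<le> s / eps + 3"
  proof -
    have x0: "0 \<le> s / eps" using s e by simp
    hence "real (nat \<lceil>s / eps\<rceil>) = real_of_int \<lceil>s / eps\<rceil>" by simp
    moreover have "real_of_int \<lceil>s / eps\<rceil> - 1 < s / eps" using ceiling_correct by blast
    ultimately have "real (nat \<lceil>s / eps\<rceil>) \<le> s / eps + 1" by linarith
    thus ?thesis unfolding K_def by simp
  qed
  moreover have "0 \<le> s / eps" using s e by simp
  ultimately have "2 + 4 * real K * ln (max 1 (real m)) \<le> 2 + 4 * (s / eps + 3) * ln (real n)"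
    by (intro add_left_mono mult_mono) auto
  also have "\<dots> \<le> 16 * (1 + s / eps) * ln (real n)"
  proof -
    have "2 \<le> 4 * ln (real n)" using lnn by simp
    moreover have "0 \<le> (s / eps) * ln (real n)" using s e lnn by simp
    moreover have "16 * (1 + s / eps) * ln (real n) - (2 + 4 * (s / eps + 3) * ln (real n))
        = (4 * ln (real n) - 2) + 12 * ((s / eps) * ln (real n))" by (simp add: algebra_simps)
    ultimately show ?thesis by linarith
  qed
  finally show "real (length (blocks s eps n)) \<le> 16 * (1 + s / eps) * ln (real n)" using b1 by simp
qed simp

end
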